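(* Let $S$ be a $\phi$-calibrated surrogate with potential $h:\mathcal{D}\to\mathbb{R}$, assume $\psi$ is injective, and suppose $h$ is $(1/\beta)$-strongly convex on $\mathcal{D}$ with respect to $\|\cdot\|_2$. Then for all $\varepsilon\ge0$, $$\zeta_h(\varepsilon)\ge\frac{\varepsilon^2}{2\beta\max_{z\neq z'}\|\psi(z)-\psi(z')\|_2^2}.$$
   Context: $\mathcal{Y},\mathcal{Z}$ finite sets ($|\mathcal{Z}|\ge2$), $\mathcal{H}$ a finite-dimensional real Euclidean space, $\psi:\mathcal{Z}\to\mathcal{H}$, $\phi:\mathcal{Y}\to\mathcal{H}$, $c\in\mathbb{R}$, $L(z,y)=\langle\psi(z),\phi(y)\rangle+c$. $\mu(q)=\sum_y q(y)\phi(y)$, $\mathcal{M}=\operatorname{hull}(\phi(\mathcal{Y}))$, $\ell(z,q)=\mathbb{E}_{Y\sim q}L(z,Y)$, $\delta\ell(z,q)=\ell(z,q)-\min_{z'}\ell(z',q)$. $z(u)$ is an element of $\arg\min_z\langle\psi(z),u\rangle$ (fixed tie-breaking). For $S:\mathcal{V}\times\mathcal{Y}\to\mathbb{R}$: $s(v,q)=\mathbb{E}_{Y\sim q}S(v,Y)$, $\delta s(v,q)=s(v,q)-\inf_{v'}s(v',q)$. $D_h(u',u)=h(u')-h(u)-\langle u'-u,\nabla h(u)\rangle$. $S$ is $\phi$-calibrated with potential $h$ if there exist convex $\mathcal{D}\supseteq\mathcal{M}$, strictly convex differentiable $h:\mathcal{D}\to\mathbb{R}$ and continuous bijection $t:\mathcal{D}\to\mathcal{V}$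 with $\delta s(v,q)=D_h(\mu(q),t^{-1}(v))$ for all $v,q$. Decoding $d(v)=z(t^{-1}(v))$; $\zeta_h(\varepsilon)=\inf\{\delta s(v,q):\delta\ell(d(v),q)\ge\varepsilon\}$. Strong convexity: $h(u)\ge h(v)+\langle u-v,\nabla h(v)\rangle+\frac1{2\beta}\|u-v\|_2^2$ for $u,v\in\mathcal{D}$. *)

theory Defs
  imports "HOL-Analysis.Analysis"
begin

definition prob_simplex :: "('y::finite \<Rightarrow> real) set" where
  "prob_simplex = {q. (\<forall>y. 0 \<le> q y) \<and> (\<Sum>y\<in>UNIV. q y) = 1}"

definition strictly_convex_on :: "'a::real_vector set \<Rightarrow> ('a \<Rightarrow> real) \<Rightarrow> bool" where
  "strictly_convex_on D f \<longleftrightarrow>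
     (\<forall>x\<in>D. \<forall>y\<in>D. \<forall>u::real. x \<noteq> y \<and> 0 < u \<and> u < 1 \<longrightarrow>
        f ((1 - u) *\<^sub>R x + u *\<^sub>R y) < (1 - u) * f x + u * f y)"

definition mu :: "('y::finite \<Rightarrow> 'h::real_vector) \<Rightarrow> ('y \<Rightarrow> real) \<Rightarrow> 'h" where
  "mu \<phi> q = (\<Sum>y\<in>UNIV. q y *\<^sub>R \<phi> y)"

definition ell :: "('z \<Rightarrow> 'h::real_inner) \<Rightarrow> ('y::finite \<Rightarrow> 'h) \<Rightarrow> real \<Rightarrow> 'z \<Rightarrow> ('y \<Rightarrow> real) \<Rightarrow> real" where
  "ell \<psi> \<phi> c z q = (\<Sum>y\<in>UNIV. q y * (inner (\<psi> z) (\<phi> y) + c))"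

definition delta_ell :: "('z::finite \<Rightarrow> 'h::real_inner) \<Rightarrow> ('y::finite \<Rightarrow> 'h) \<Rightarrow> real \<Rightarrow> 'z \<Rightarrow> ('y \<Rightarrow> real) \<Rightarrow> real" where
  "delta_ell \<psi> \<phi> c z q = ell \<psi> \<phi> c z q - Min ((\<lambda>z'. ell \<psi> \<phi> c z' q) ` UNIV)"

definition s_exp :: "('v \<Rightarrow> 'y::finite \<Rightarrow> real) \<Rightarrow> 'v \<Rightarrow> ('y \<Rightarrow> real) \<Rightarrow> real" where
  "s_exp S v q = (\<Sum>y\<in>UNIV. q y * S v y)"

definition delta_s :: "('v \<Rightarrow> 'y::finite \<Rightarrow> real) \<Rightarrow> 'v set \<Rightarrow> 'v \<Rightarrow> ('y \<Rightarrow> real) \<Rightarrow> real" where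
  "delta_s S V v q = s_exp S v q - Inf ((\<lambda>v'. s_exp S v' q) ` V)"

definition bregman :: "('h::real_inner \<Rightarrow> real) \<Rightarrow> ('h \<Rightarrow> 'h) \<Rightarrow> 'h \<Rightarrow> 'h \<Rightarrow> real" where
  "bregman h gh u' u = h u' - h u - inner (u' - u) (gh u)"

text \<open>Calibration function, with the convention \<open>inf \<emptyset> = \<infinity>\<close> (extended reals).\<close>
definition zeta :: "('v \<Rightarrow> 'y::finite \<Rightarrow> real) \<Rightarrow> 'v set \<Rightarrow> ('z::finite \<Rightarrow> 'h::real_inner)
    \<Rightarrow> ('y \<Rightarrow> 'h) \<Rightarrow> real \<Rightarrow> ('v \<Rightarrow> 'z) \<Rightarrow> real \<Rightarrow> ereal" where
  "zeta S V \<psi> \<phi> c d \<epsilon> =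
     Inf {ereal (delta_s S V v q) | v q. v \<in> V \<and> q \<in> prob_simplex \<and> delta_ell \<psi> \<phi> c (d v) q \<ge> \<epsilon>}"

end

theory Submission
  imports Defs
begin

lemma ell_eq:
  fixes \<psi> :: "'z \<Rightarrow> 'h::real_inner" and \<phi> :: "'y::finite \<Rightarrow> 'h"
  assumes "q \<in> prob_simplex"
  shows "ell \<psi> \<phi> c z q = inner (\<psi> z) (mu \<phi> q) + c"
proof -
  have s1: "(\<Sum>y\<in>UNIV. q y) = 1" using assms by (simp add: prob_simplex_def)
  have "ell \<psi> \<phi> c z q = (\<Sum>y\<in>UNIV. q y * inner (\<psi> z) (\<phi> y)) + (\<Sum>y\<in>UNIV. q y) * c"
    unfolding ell_def by (simp add: algebra_simps sum.distrib sum_distrib_right sum_distrib_left)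
  also have "\<dots> = inner (\<psi> z) (mu \<phi> q) + c"
    unfolding mu_def s1 by (simp add: inner_sum_right)
  finally show ?thesis .
qed

lemma mu_in:
  fixes \<phi> :: "'y::finite \<Rightarrow> 'h::real_vector"
  assumes "q \<in> prob_simplex"
  shows "mu \<phi> q \<in> convex hull (range \<phi>)"
  unfolding mu_def
  apply (rule convex_sum)
  using assms by (auto simp: prob_simplex_def hull_inc)

theorem theoremD4:
  fixes \<psi> :: "'z::finite \<Rightarrow> 'h::euclidean_space"
    and \<phi> :: "'y::finite \<Rightarrow> 'h"
    and c :: real
    and zsel :: "'h \<Rightarrow> 'z"
    and S :: "'v::topological_space \<Rightarrow> 'y \<Rightarrow> real"
    and V :: "'v set"
    and D :: "'h set"
    and h :: "'h \<Rightarrow> real"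
    and gh :: "'h \<Rightarrow> 'h"
    and t :: "'h \<Rightarrow> 'v"
    and \<beta> :: real
    and \<epsilon> :: real
  assumes card_Z: "CARD('z) \<ge> 2"
    and zsel_argmin: "\<forall>u z'. inner (\<psi> (zsel u)) u \<le> inner (\<psi> z') u"
    and D_convex: "convex D"
    and M_sub_D: "convex hull (range \<phi>) \<subseteq> D"
    and h_strict: "strictly_convex_on D h"
    and h_grad: "\<forall>u\<in>D. (h has_derivative (\<lambda>x. inner (gh u) x)) (at u within D)"
    and t_cont: "continuous_on D t"
    and t_bij: "bij_betw t D V"
    and calibrated: "\<forall>v\<in>V. \<forall>q\<in>prob_simplex. delta_s S V v q = bregman h gh (mu \<phi> q) (inv_into D t v)"
    and psi_inj: "inj \<psi>"
    and beta_pos: "\<beta> > 0"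
    and strongly_convex: "\<forall>u\<in>D. \<forall>w\<in>D. h u \<ge> h w + inner (u - w) (gh w) + (1 / (2 * \<beta>)) * (norm (u - w))\<^sup>2"
    and eps_nonneg: "\<epsilon> \<ge> 0"
  shows "zeta S V \<psi> \<phi> c (\<lambda>v. zsel (inv_into D t v)) \<epsilon>
           \<ge> ereal (\<epsilon>\<^sup>2 / (2 * \<beta> * Max {(norm (\<psi> z - \<psi> z'))\<^sup>2 | z z'. z \<noteq> z'}))"
  unfolding zeta_def
proof (rule Inf_greatest, clarify)
  fix v q
  assume v: "v \<in> V" and q: "q \<in> prob_simplex"
    and de: "\<epsilon> \<le> delta_ell \<psi> \<phi> c (zsel (inv_into D t v)) q"
  define u where "u = inv_into D t v"
  define m where "m = mu \<phi> q"
  define M where "M = Max {(norm (\<psi> z - \<psi> z'))\<^sup>2 | z z'. z \<noteq> z'}"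
  have uD: "u \<in> D" unfolding u_def using t_bij v
    by (metis bij_betw_def inv_into_into)
  have mD: "m \<in> D" unfolding m_def using mu_in[OF q] M_sub_D by blast
  have ds: "delta_s S V v q = bregman h gh m u" using calibrated v q u_def m_def by auto
  have ds_ge: "delta_s S V v q \<ge> (1 / (2 * \<beta>)) * (norm (m - u))\<^sup>2"
    using ds strongly_convex uD mD unfolding bregman_def by force
  have fin: "finite ((\<lambda>z'. ell \<psi> \<phi> c z' q) ` UNIV)" by simp
  obtain zs where zs: "ell \<psi> \<phi> c zs q = Min ((\<lambda>z'. ell \<psi> \<phi> c z' q) ` UNIV)"
  proof -
    have "Min ((\<lambda>z'. ell \<psi> \<phi> c z' q) ` UNIV) \<in> (\<lambda>z'. ell \<psi> \<phi> c z' q) ` UNIV"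
      using Min_in[OF fin] by blast
    then show ?thesis using that by (metis imageE)
  qed
  define a where "a = \<psi> (zsel u) - \<psi> zs"
  have del: "delta_ell \<psi> \<phi> c (zsel u) q = inner a m"
    unfolding delta_ell_def zs[symmetric] a_def m_def
    by (simp add: ell_eq[OF q] inner_diff_left)
  have au: "inner a u \<le> 0" using zsel_argmin unfolding a_def by (simp add: inner_diff_left)
  have ep: "\<epsilon> \<le> inner a m" using de del u_def by simp
  have "inner a m \<le> inner a (m - u)" using au by (simp add: inner_diff_right)
  also have "\<dots> \<le> norm a * norm (m - u)" by (rule norm_cauchy_schwarz)
  finally have em: "\<epsilon> \<le> norm a * norm (m - u)" using ep by linarith
  show "ereal (\<epsilon>\<^sup>2 / (2 * \<beta> * M)) \<le> ereal (delta_s S V v q)"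
  proof (cases "\<epsilon> = 0")
    case True
    have "0 \<le> (1 / (2 * \<beta>)) * (norm (m - u))\<^sup>2" using beta_pos by simp
    then show ?thesis using True ds_ge by simp
  next
    case False
    then have epos: "\<epsilon> > 0" using eps_nonneg by simp
    have "a \<noteq> 0" using em epos by auto
    then have "zsel u \<noteq> zs" unfolding a_def by auto
    then have ain: "(norm a)\<^sup>2 \<in> {(norm (\<psi> z - \<psi> z'))\<^sup>2 | z z'. z \<noteq> z'}" unfolding a_def by blast
    have finM: "finite {(norm (\<psi> z - \<psi> z'))\<^sup>2 | z z'. z \<noteq> z'}"
    proof -
      have "{(norm (\<psi> z - \<psi> z'))\<^sup>2 | z z'. z \<noteq> z'} \<subseteq> (\<lambda>(z,z'). (norm (\<psi> z - \<psi> z'))\<^sup>2) ` UNIV"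
        by auto
      then show ?thesis by (rule finite_subset) simp
    qed
    have aM: "(norm a)\<^sup>2 \<le> M" unfolding M_def using Max_ge[OF finM ain] .
    have apos: "(norm a)\<^sup>2 > 0" using \<open>a \<noteq> 0\<close> by simp
    have Mpos: "M > 0" using aM apos by linarith
    have "\<epsilon>\<^sup>2 \<le> (norm a * norm (m - u))\<^sup>2"
      using em epos by (intro power_mono) auto
    also have "\<dots> = (norm a)\<^sup>2 * (norm (m - u))\<^sup>2" by (simp add: power_mult_distrib)
    also have "\<dots> \<le> M * (norm (m - u))\<^sup>2" using aM by (intro mult_right_mono) auto
    finally have e2: "\<epsilon>\<^sup>2 \<le> M * (norm (m - u))\<^sup>2" .
    have "\<epsilon>\<^sup>2 / (2 * \<beta> * M) \<le> M * (norm (m - u))\<^sup>2 / (2 * \<beta> * M)"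
      using e2 Mpos beta_pos by (intro divide_right_mono) auto
    also have "\<dots> = (1 / (2 * \<beta>)) * (norm (m - u))\<^sup>2" using Mpos by simp
    finally show ?thesis using ds_ge M_def by simp
  qed
qed

end
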